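(* For every partition $\Sigma$ (of well-founded sets) and every bijection $q\mapsto q^{(\bullet)}$ from a set of places $\mathcal P_\Sigma$ onto $\Sigma$, the $\otimes$-graph $\mathcal G_\Sigma$ induced by $\Sigma$ via this bijection is accessible.
   Context: Sets range over the von Neumann universe of well-founded sets. For sets $s,t$, $s\otimes t=\{\{u,v\} : u\in s,\ v\in t\}$. A partition is a set of pairwise disjoint nonempty sets (blocks). For a set $S$, $\mathrm{Pow}^*_{1,2}(S)=\{t\subseteq\bigcup S : 1\le|t|\le2,\ t\cap s\neq\emptyset\text{ for all }s\in S\}$, and for a family $\mathcal B$, $\mathrm{Pow}^*_{1,2}[\mathcal B]=\{\mathrm{Pow}^*_{1,2}(B):B\in\mathcal B\}$. A subset $\Sigma^*\subseteq\Sigma$ is a $\otimes$-subpartition if $\bigcup\Sigma^*=\bigcup\mathrm{Pow}^*_{1,2}[\mathcal B]$ for some $\mathcal B\subseteq\Sigma\otimes\Sigma$; $\Sigma_\otimes$ is the largest $\otimes$-subpartition and $\Pi_\otimes\subseteq\Sigma\otimes\Sigma$ is the (unique) set with $\bigcup\Sigma_\otimes=\bigcup\mathrm{Pow}^*_{1,2}[\Pi_\otimes]$. A $\otimes$-graph $\mathcal G=(\mathcal P,\mathcal N,\mathcal T)$ consists of a set $\mathcal P$ of places, nodes $\mathcal N=\mathcal P\otimes\mathcal P$ (nonempty subsets of $\mathcal P$ with at most two elements), $\mathcal P\cap\mathcal N=\emptyset$, and a target map $\mathcal T:\mathcal N\to\mathcal P(\mathcal P)$. A source place is a place belonging to no $\mathcal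 T(A)$. The accessible places form the smallest set of places containing all source places and containing $\mathcal T(A)$ whenever all places of the node $A$ belong to it; $\mathcal G$ is accessible if every place is accessible. The $\otimes$-graph induced by $\Sigma$ via a bijection $q\mapsto q^{(\bullet)}$ from $\mathcal P_\Sigma$ (with $\mathcal P_\Sigma\cap(\mathcal P_\Sigma\otimes\mathcal P_\Sigma)=\emptyset$) onto $\Sigma$ has nodes $\mathcal P_\Sigma\otimes\mathcal P_\Sigma$ and, writing $B^{(\bullet)}=\{q^{(\bullet)}:q\in B\}$, target map $\mathcal T_\Sigma(B)=\{q\in\mathcal P_\Sigma : q^{(\bullet)}\in\Sigma_\otimes,\ q^{(\bullet)}\cap\mathrm{Pow}^*_{1,2}(B^{(\bullet)})\neq\emptyset\}$ if $B^{(\bullet)}\in\Pi_\otimes$, and $\mathcal T_\Sigma(B)=\emptyset$ otherwise. *)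

theory Defs
  imports Main
begin

text \<open>Well-founded sets are modelled by an arbitrary type 'a carrying a membership
relation mem that is well-founded, extensional and closed under pairing
(a model of the relevant fragment of the von Neumann universe).
ext x is the set of members of x.\<close>

definition wf_set_model :: "('a \<Rightarrow> 'a \<Rightarrow> bool) \<Rightarrow> bool" where
  "wf_set_model mem \<longleftrightarrow>
     wf {(x, y). mem x y}
   \<and> (\<forall>x y. (\<forall>z. mem z x \<longleftrightarrow> mem z y) \<longrightarrow> x = y)
   \<and> (\<forall>u v. \<exists>x. \<forall>z. mem z x \<longleftrightarrow> z = u \<or> z = v)"

definition ext :: "('a \<Rightarrow> 'a \<Rightarrow> bool) \<Rightarrow> 'a \<Rightarrow> 'a set" where
  "ext mem x = {z. mem z x}"

definition otimes :: "'b set \<Rightarrow> 'b set \<Rightarrow> 'b set set" where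
  "otimes s t = {{u, v} | u v. u \<in> s \<and> v \<in> t}"

definition is_partition :: "'b set set \<Rightarrow> bool" where
  "is_partition \<Sigma> \<longleftrightarrow> (\<forall>s\<in>\<Sigma>. s \<noteq> {}) \<and> (\<forall>s\<in>\<Sigma>. \<forall>t\<in>\<Sigma>. s \<noteq> t \<longrightarrow> s \<inter> t = {})"

definition Pow12 :: "('a \<Rightarrow> 'a \<Rightarrow> bool) \<Rightarrow> 'a set set \<Rightarrow> 'a set" where
  "Pow12 mem S = {x. ext mem x \<subseteq> \<Union>S \<and> 1 \<le> card (ext mem x) \<and> card (ext mem x) \<le> 2
                     \<and> (\<forall>s\<in>S. ext mem x \<inter> s \<noteq> {})}"

definition Pow12_fam :: "('a \<Rightarrow> 'a \<Rightarrow> bool) \<Rightarrow> 'a set set set \<Rightarrow> 'a set set" where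
  "Pow12_fam mem \<B> = {Pow12 mem B | B. B \<in> \<B>}"

definition is_otimes_subpartition ::
    "('a \<Rightarrow> 'a \<Rightarrow> bool) \<Rightarrow> 'a set set \<Rightarrow> 'a set set \<Rightarrow> bool" where
  "is_otimes_subpartition mem \<Sigma> S \<longleftrightarrow> S \<subseteq> \<Sigma> \<and>
     (\<exists>\<B>. \<B> \<subseteq> otimes \<Sigma> \<Sigma> \<and> \<Union>S = \<Union>(Pow12_fam mem \<B>))"

definition Sigma_otimes :: "('a \<Rightarrow> 'a \<Rightarrow> bool) \<Rightarrow> 'a set set \<Rightarrow> 'a set set" where
  "Sigma_otimes mem \<Sigma> = (GREATEST S. is_otimes_subpartition mem \<Sigma> S)"

definition Pi_otimes :: "('a \<Rightarrow> 'a \<Rightarrow> bool) \<Rightarrow> 'a set set \<Rightarrow> 'a set set set" where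
  "Pi_otimes mem \<Sigma> = (THE \<B>. \<B> \<subseteq> otimes \<Sigma> \<Sigma> \<and>
                         \<Union>(Sigma_otimes mem \<Sigma>) = \<Union>(Pow12_fam mem \<B>))"

text \<open>\<otimes>-graphs: places P (of type 'p), nodes P \<otimes> P (of type 'p set, hence
automatically disjoint from the places), target map T.\<close>
definition source_places :: "'p set \<Rightarrow> ('p set \<Rightarrow> 'p set) \<Rightarrow> 'p set" where
  "source_places P T = {p \<in> P. \<forall>A \<in> otimes P P. p \<notin> T A}"

definition accessible_places :: "'p set \<Rightarrow> ('p set \<Rightarrow> 'p set) \<Rightarrow> 'p set" where
  "accessible_places P T = \<Inter>{X. X \<subseteq> P \<and> source_places P T \<subseteq> X
       \<and> (\<forall>A \<in> otimes P P. A \<subseteq> X \<longrightarrow> T A \<subseteq> X)}"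

definition accessible_graph :: "'p set \<Rightarrow> ('p set \<Rightarrow> 'p set) \<Rightarrow> bool" where
  "accessible_graph P T \<longleftrightarrow> accessible_places P T = P"

definition induced_target ::
    "('a \<Rightarrow> 'a \<Rightarrow> bool) \<Rightarrow> 'a set set \<Rightarrow> 'p set \<Rightarrow> ('p \<Rightarrow> 'a set) \<Rightarrow> 'p set \<Rightarrow> 'p set" where
  "induced_target mem \<Sigma> P f B =
     (if f ` B \<in> Pi_otimes mem \<Sigma>
      then {q \<in> P. f q \<in> Sigma_otimes mem \<Sigma> \<and> f q \<inter> Pow12 mem (f ` B) \<noteq> {}}
      else {})"

end

theory Submission
  imports Defs
begin

lemma pow12_sub:
  assumes part: "is_partition \<Sigma>" and B: "B \<subseteq> \<Sigma>" and B': "B' \<subseteq> \<Sigma>"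
    and x: "x \<in> Pow12 mem B" and x': "x \<in> Pow12 mem B'"
  shows "B \<subseteq> B'"
proof
  fix s assume s: "s \<in> B"
  then have "ext mem x \<inter> s \<noteq> {}" using x unfolding Pow12_def by blast
  then obtain y where y: "y \<in> ext mem x" "y \<in> s" by blast
  then have "y \<in> \<Union>B'" using x' unfolding Pow12_def by blast
  then obtain s' where s': "s' \<in> B'" "y \<in> s'" by blast
  have "s = s'" using part s s' y B B' unfolding is_partition_def by blast
  then show "s \<in> B'" using s' by simp
qed

lemma pow12_same:
  assumes "is_partition \<Sigma>" "B \<subseteq> \<Sigma>" "B' \<subseteq> \<Sigma>"
    "x \<in> Pow12 mem B" "x \<in> Pow12 mem B'"
  shows "B = B'"
  using pow12_sub[OF assms] pow12_sub[OF assms(1,3,2,5,4)] by blast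

lemma otimes_sub: "B \<in> otimes \<Sigma> \<Sigma> \<Longrightarrow> B \<subseteq> \<Sigma>"
  unfolding otimes_def by auto

lemma pow12_nonempty:
  assumes wf: "wf_set_model mem" and part: "is_partition \<Sigma>" and B: "B \<in> otimes \<Sigma> \<Sigma>"
  shows "Pow12 mem B \<noteq> {}"
proof -
  obtain u v where uv: "B = {u, v}" "u \<in> \<Sigma>" "v \<in> \<Sigma>" using B unfolding otimes_def by auto
  have ne: "\<forall>s\<in>\<Sigma>. s \<noteq> {}" using part unfolding is_partition_def by (rule conjunct1)
  obtain a where a: "a \<in> u" using ne uv(2) by auto
  obtain b where b: "b \<in> v" using ne uv(3) by auto
  have pr: "\<forall>u v. \<exists>x. \<forall>z. mem z x \<longleftrightarrow> z = u \<or> z = v" using wf unfolding wf_set_model_def by (rule conjunct2[OF conjunct2])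
  obtain x where x: "\<forall>z. mem z x \<longleftrightarrow> z = a \<or> z = b" using pr by blast
  have e: "ext mem x = {a, b}" using x unfolding ext_def by auto
  have c1: "1 \<le> card {a, b}" by (simp add: card_insert_if)
  have c2: "card {a, b} \<le> 2" by (simp add: card_insert_if)
  have s: "{a, b} \<subseteq> \<Union>B" using uv a b by auto
  have m: "\<forall>s\<in>B. {a, b} \<inter> s \<noteq> {}" using uv a b by auto
  have "ext mem x \<subseteq> \<Union>B \<and> 1 \<le> card (ext mem x) \<and> card (ext mem x) \<le> 2
                     \<and> (\<forall>s\<in>B. ext mem x \<inter> s \<noteq> {})" unfolding e using c1 c2 s m by (intro conjI)
  then have "x \<in> Pow12 mem B" unfolding Pow12_def by (rule CollectI)
  then show ?thesis by (rule ex_in_conv[THEN iffD1, OF exI])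
qed

lemma Pi_unique:
  assumes wf: "wf_set_model mem" and part: "is_partition \<Sigma>"
    and B1: "B1 \<subseteq> otimes \<Sigma> \<Sigma>" and B2: "B2 \<subseteq> otimes \<Sigma> \<Sigma>"
    and eq: "\<Union>(Pow12_fam mem B1) = \<Union>(Pow12_fam mem B2)"
  shows "B1 \<subseteq> B2"
proof
  fix B assume B: "B \<in> B1"
  obtain x where x: "x \<in> Pow12 mem B" using pow12_nonempty[OF wf part] B B1 by blast
  then have "x \<in> \<Union>(Pow12_fam mem B2)" using eq B unfolding Pow12_fam_def by blast
  then obtain B' where B': "B' \<in> B2" "x \<in> Pow12 mem B'" unfolding Pow12_fam_def by blast
  have "B = B'" using pow12_same[OF part _ _ x B'(2)] otimes_sub B B1 B' B2 by blast
  then show "B \<in> B2" using B' by simp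
qed

lemma Sigma_otimes_prop:
  "is_otimes_subpartition mem \<Sigma> (Sigma_otimes mem \<Sigma>)"
proof -
  define U where "U = \<Union>{S. is_otimes_subpartition mem \<Sigma> S}"
  define F where "F = (\<lambda>S. SOME \<B>. \<B> \<subseteq> otimes \<Sigma> \<Sigma> \<and> \<Union>S = \<Union>(Pow12_fam mem \<B>))"
  have F: "F S \<subseteq> otimes \<Sigma> \<Sigma> \<and> \<Union>S = \<Union>(Pow12_fam mem (F S))"
    if "is_otimes_subpartition mem \<Sigma> S" for S
    using that unfolding is_otimes_subpartition_def F_def by (metis (mono_tags, lifting) someI_ex)
  define BB where "BB = \<Union>(F ` {S. is_otimes_subpartition mem \<Sigma> S})"
  have "U \<subseteq> \<Sigma>" unfolding U_def is_otimes_subpartition_def by blast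
  moreover have "BB \<subseteq> otimes \<Sigma> \<Sigma>" unfolding BB_def using F by blast
  moreover have "\<Union>U = \<Union>(Pow12_fam mem BB)"
  proof
    show "\<Union>U \<subseteq> \<Union>(Pow12_fam mem BB)"
    proof
      fix x assume "x \<in> \<Union>U"
      then obtain S where S: "is_otimes_subpartition mem \<Sigma> S" "x \<in> \<Union>S" unfolding U_def by blast
      then have "x \<in> \<Union>(Pow12_fam mem (F S))" using F by blast
      then show "x \<in> \<Union>(Pow12_fam mem BB)" using S unfolding BB_def Pow12_fam_def by blast
    qed
    show "\<Union>(Pow12_fam mem BB) \<subseteq> \<Union>U"
    proof
      fix x assume "x \<in> \<Union>(Pow12_fam mem BB)"
      then obtain B S where BS: "is_otimes_subpartition mem \<Sigma> S" "B \<in> F S" "x \<in> Pow12 mem B"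
        unfolding BB_def Pow12_fam_def by blast
      then have "x \<in> \<Union>(Pow12_fam mem (F S))" unfolding Pow12_fam_def by blast
      then have "x \<in> \<Union>S" using F[OF BS(1)] by blast
      then show "x \<in> \<Union>U" using BS unfolding U_def by blast
    qed
  qed
  ultimately have U: "is_otimes_subpartition mem \<Sigma> U" unfolding is_otimes_subpartition_def by blast
  have "Sigma_otimes mem \<Sigma> = U" unfolding Sigma_otimes_def
  proof (rule Greatest_equality)
    show "is_otimes_subpartition mem \<Sigma> U" by (rule U)
  next
    fix y assume "is_otimes_subpartition mem \<Sigma> y"
    then show "y \<le> U" unfolding U_def by blast
  qed
  then show ?thesis using U by (simp only:)
qed

lemma Pi_prop:
  assumes wf: "wf_set_model mem" and part: "is_partition \<Sigma>"
  shows "Pi_otimes mem \<Sigma> \<subseteq> otimes \<Sigma> \<Sigma> \<and>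
         \<Union>(Sigma_otimes mem \<Sigma>) = \<Union>(Pow12_fam mem (Pi_otimes mem \<Sigma>))"
proof -
  have ex: "\<exists>\<B>. \<B> \<subseteq> otimes \<Sigma> \<Sigma> \<and> \<Union>(Sigma_otimes mem \<Sigma>) = \<Union>(Pow12_fam mem \<B>)"
    using Sigma_otimes_prop[of mem \<Sigma>] unfolding is_otimes_subpartition_def by (rule conjunct2)
  have "\<exists>!\<B>. \<B> \<subseteq> otimes \<Sigma> \<Sigma> \<and> \<Union>(Sigma_otimes mem \<Sigma>) = \<Union>(Pow12_fam mem \<B>)"
  proof (rule ex_ex1I[OF ex])
    fix B1 B2 assume h1: "B1 \<subseteq> otimes \<Sigma> \<Sigma> \<and> \<Union>(Sigma_otimes mem \<Sigma>) = \<Union>(Pow12_fam mem B1)"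
      and h2: "B2 \<subseteq> otimes \<Sigma> \<Sigma> \<and> \<Union>(Sigma_otimes mem \<Sigma>) = \<Union>(Pow12_fam mem B2)"
    have e: "\<Union>(Pow12_fam mem B1) = \<Union>(Pow12_fam mem B2)" using h1 h2 by simp
    have "B1 \<subseteq> B2" by (rule Pi_unique[OF wf part conjunct1[OF h1] conjunct1[OF h2] e])
    moreover have "B2 \<subseteq> B1" by (rule Pi_unique[OF wf part conjunct1[OF h2] conjunct1[OF h1] e[symmetric]])
    ultimately show "B1 = B2" by (rule subset_antisym)
  qed
  then show ?thesis unfolding Pi_otimes_def by (rule theI')
qed

theorem mainTheorem10:
  fixes mem :: "'a \<Rightarrow> 'a \<Rightarrow> bool"
    and \<Sigma> :: "'a set set"
    and P :: "'p set"
    and f :: "'p \<Rightarrow> 'a set"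
  assumes "wf_set_model mem"
    and "is_partition \<Sigma>"
    and "bij_betw f P \<Sigma>"
  shows "accessible_graph P (induced_target mem \<Sigma> P f)"
proof -
  note wf = assms(1) and part = assms(2) and bij = assms(3)
  define T where "T = induced_target mem \<Sigma> P f"
  define Acc where "Acc = accessible_places P T"
  have TP: "T A \<subseteq> P" for A unfolding T_def induced_target_def by auto
  define Fam where "Fam = {X. X \<subseteq> P \<and> source_places P T \<subseteq> X
       \<and> (\<forall>A \<in> otimes P P. A \<subseteq> X \<longrightarrow> T A \<subseteq> X)}"
  have AccF: "Acc = \<Inter>Fam" unfolding Acc_def accessible_places_def Fam_def by (rule refl)
  have srcP: "source_places P T \<subseteq> P" unfolding source_places_def by (rule Collect_restrict)
  have PF: "P \<in> Fam" unfolding Fam_def using TP srcP by simp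
  have AccP: "Acc \<subseteq> P" unfolding AccF using PF by (rule Inter_lower)
  have src: "source_places P T \<subseteq> Acc" unfolding AccF
  proof (rule Inter_greatest)
    fix X assume "X \<in> Fam" then show "source_places P T \<subseteq> X" unfolding Fam_def by simp
  qed
  have cl: "T A \<subseteq> Acc" if A1: "A \<in> otimes P P" and A2: "A \<subseteq> Acc" for A
    unfolding AccF
  proof (rule Inter_greatest)
    fix X assume X: "X \<in> Fam"
    then have "A \<subseteq> X" using A2 unfolding AccF by (rule Inter_lower[THEN subset_trans[rotated]])
    then show "T A \<subseteq> X" using X A1 unfolding Fam_def by simp
  qed
  have fP: "f ` P = \<Sigma>" using bij by (simp add: bij_betw_def)
  have ne: "\<forall>s\<in>\<Sigma>. s \<noteq> {}" using part unfolding is_partition_def by (rule conjunct1)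
  have wfm: "wf {(x, y). mem x y}" using wf unfolding wf_set_model_def by (rule conjunct1)
  have piP: "Pi_otimes mem \<Sigma> \<subseteq> otimes \<Sigma> \<Sigma>"
    and piU: "\<Union>(Sigma_otimes mem \<Sigma>) = \<Union>(Pow12_fam mem (Pi_otimes mem \<Sigma>))"
    using Pi_prop[OF wf part] by auto
  have claim: "\<forall>q\<in>P. x \<in> f q \<longrightarrow> q \<in> Acc" for x
  proof (induction x rule: wf_induct[OF wfm])
    case (1 x)
    show ?case
    proof (intro ballI impI)
      fix q assume q: "q \<in> P" "x \<in> f q"
      show "q \<in> Acc"
      proof (cases "f q \<in> Sigma_otimes mem \<Sigma>")
        case False
        have "q \<notin> T A" for A unfolding T_def induced_target_def using False by simp
        then have "q \<in> source_places P T" using q unfolding source_places_def by simp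
        then show ?thesis using src by blast
      next
        case True
        then have "x \<in> \<Union>(Pow12_fam mem (Pi_otimes mem \<Sigma>))" using piU q by blast
        then obtain B' where B': "B' \<in> Pi_otimes mem \<Sigma>" "x \<in> Pow12 mem B'"
          unfolding Pow12_fam_def by blast
        have "B' \<in> otimes \<Sigma> \<Sigma>" using piP B'(1) by (rule subsetD)
        then obtain u v where uv: "B' = {u, v}" "u \<in> \<Sigma>" "v \<in> \<Sigma>"
          unfolding otimes_def by auto
        obtain a where a: "a \<in> P" "f a = u" using fP uv(2) by auto
        obtain b where b: "b \<in> P" "f b = v" using fP uv(3) by auto
        have A: "{a, b} \<in> otimes P P" using a b unfolding otimes_def by blast
        have fA: "f ` {a, b} = B'" using a b uv by auto
        have accs: "c \<in> Acc" if "c \<in> {a, b}" for c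
        proof -
          have "f c \<in> B'" using that fA by blast
          then have "ext mem x \<inter> f c \<noteq> {}" using B' unfolding Pow12_def by blast
          then obtain y where y: "mem y x" "y \<in> f c" unfolding ext_def by blast
          have "c \<in> P" using that a b by blast
          then show ?thesis using 1 y by blast
        qed
        have "q \<in> T {a, b}" unfolding T_def induced_target_def using fA B' q True by auto
        then show ?thesis using cl[OF A] accs by blast
      qed
    qed
  qed
  have "P \<subseteq> Acc"
  proof
    fix q assume q: "q \<in> P"
    then have "f q \<in> \<Sigma>" using fP by auto
    then obtain x where "x \<in> f q" using ne by auto
    then show "q \<in> Acc" using claim q by blast
  qed
  then show ?thesis using AccP unfolding accessible_graph_def Acc_def T_def by blast
qed

end
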